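(* Protocol P4 (described in the context) perfectly constructs (i.e. $0$-constructs) the Remote State Preparation with Selective NOT resource RSP-SN from one use of the Remote Unitary resource RU, in the Abstract Cryptography framework.
   Context: Notation: $C(\rho)$ denotes $C\rho C^\dagger$; $Z$ is the Pauli phase flip. Abstract Cryptography (AC) framework (two parties: a Sender, always assumed honest, and a Receiver). A resource is a system with an interface for each party which receives (classical or quantum) inputs at its interfaces, applies a specified CPTP map, and returns outputs at interfaces; a filtered interface is accessible only to a dishonest party (and is set to a default value when the party is honest). A protocol $\pi=(\pi_S,\pi_R)$ consists of converters (sequences of CPTP maps describing honest parties' actions) plugged into the interfaces of the available resource $\mathcal R$, giving a new resource $\pi\mathcal R$. A distinguisher is an unbounded system interacting adaptively with all outer interfaces of a resource and outputting a bit. Two resources are $\epsilon$-indistinguishable, $\mathcal R_1\approx_\epsilon\mathcal R_2$, if for every distinguisher $\mathcal D$, $|\Pr[\mathcal D\mathcal R_1=1]-\Pr[\mathcal D\mathcal R_2=1]|\le\epsilon$. A protocol $\pi$ $\epsilon$-constructs $\mathcal S$ from $\mathcal R$ if (1) correctness: $\pi\mathcal R\approx_\epsilon\mathcal S$ (filtered interfaces at their honest defaults), and (2) security against a malicious Receiver: there exists a converter (simulator) $\sigma$ plugged into the Receiver's interface (including filtered interfaces) of $\mathcal S$ with $\pi_S\mathcal R\approx_\epsilon \mathcal S\sigma$. "Perfectly" means $\epsilon=0$. Resource RSP-SN: the Sender inputs the classical description of a single-qubit unitary $U$; the Receiver inputs a bit $b\in\{0,1\}$ on a filtered interface (set to $0$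 in the honest case); the resource sends a qubit in state $U|b\rangle$ to the Receiver. Resource RU: the Sender inputs the classical description of a single-qubit unitary $U$; the Receiver inputs a single qubit in state $\rho$; the resource outputs $U(\rho)$ to the Receiver. Protocol P4 (Sender input: single-qubit unitary $U$): the Sender samples $d\in\{0,1\}$ uniformly at random and inputs the unitary $UZ^d$ into RU; the honest Receiver inputs a qubit in state $|0\rangle$ and sets the qubit returned by RU as its output. *)

theory Defs
  imports Complex_Main "Jordan_Normal_Form.Matrix"
begin

definition adj :: "complex mat \<Rightarrow> complex mat" where
  "adj A = mat (dim_col A) (dim_row A) (\<lambda>(i,j). cnj (A $$ (j,i)))"

definition kron :: "complex mat \<Rightarrow> complex mat \<Rightarrow> complex mat" where
  "kron A B = mat (dim_row A * dim_row B) (dim_col A * dim_col B)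
     (\<lambda>(i,j). A $$ (i div dim_row B, j div dim_col B) * B $$ (i mod dim_row B, j mod dim_col B))"

definition trace :: "complex mat \<Rightarrow> complex" where
  "trace A = (\<Sum>i<dim_row A. A $$ (i,i))"

definition msum :: "nat \<Rightarrow> complex mat list \<Rightarrow> complex mat" where
  "msum d xs = foldr (+) xs (0\<^sub>m d d)"

definition psd :: "nat \<Rightarrow> complex mat \<Rightarrow> bool" where
  "psd d A \<longleftrightarrow> A \<in> carrier_mat d d \<and> (\<exists>B \<in> carrier_mat d d. A = B * adj B)"

definition effect :: "nat \<Rightarrow> complex mat \<Rightarrow> bool" where
  "effect d E \<longleftrightarrow> psd d E \<and> psd d (1\<^sub>m d - E)"

definition unitary2 :: "complex mat \<Rightarrow> bool" where
  "unitary2 U \<longleftrightarrow> U \<in> carrier_mat 2 2 \<and> U * adj U = 1\<^sub>m 2"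

definition conj_op :: "complex mat \<Rightarrow> complex mat \<Rightarrow> complex mat" where
  "conj_op C \<rho> = C * \<rho> * adj C"

text \<open>Action on the qubit of a (reference \<otimes> qubit) system; the reference
  system (held by the distinguisher) has dimension n and comes first.\<close>
definition lift :: "nat \<Rightarrow> complex mat \<Rightarrow> complex mat" where
  "lift n V = kron (1\<^sub>m n) V"

definition proj :: "nat \<Rightarrow> complex mat" where
  "proj b = mat 2 2 (\<lambda>(i,j). if i = b \<and> j = b then 1 else 0)"

definition pauliZ :: "complex mat" where
  "pauliZ = mat 2 2 (\<lambda>(i,j). if i = j then (if i = 0 then 1 else -1) else 0)"

text \<open>RSP-SN: Sender inputs U, Receiver (filtered) inputs bit b; output U|b>.\<close>
definition RSPSN :: "complex mat \<Rightarrow> nat \<Rightarrow> complex mat" where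
  "RSPSN U b = conj_op U (proj b)"

text \<open>RU: Sender inputs U, Receiver inputs a qubit (possibly entangled with
  an n-dimensional reference held by the environment); output U(rho).\<close>
definition RU :: "nat \<Rightarrow> complex mat \<Rightarrow> complex mat \<Rightarrow> complex mat" where
  "RU n U \<rho> = conj_op (lift n U) \<rho>"

text \<open>pi_S plugged into RU (Receiver interface of RU left open): the Sender
  samples d uniformly and inputs U Z^d into RU.\<close>
definition P4_real_mal :: "nat \<Rightarrow> complex mat \<Rightarrow> complex mat \<Rightarrow> complex mat" where
  "P4_real_mal n U \<rho> =
     msum (n*2) (map (\<lambda>d. (1/2 :: complex) \<cdot>\<^sub>m RU n (U * (pauliZ ^\<^sub>m d)) \<rho>) [0,1])"

text \<open>pi_S and pi_R plugged into RU (honest Receiver inputs |0>, outputs result);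
  sigma is the (correlated) internal memory of the distinguisher, dimension n.\<close>
definition P4_real_hon :: "nat \<Rightarrow> complex mat \<Rightarrow> complex mat \<Rightarrow> complex mat" where
  "P4_real_hon n U \<sigma> =
     msum (n*2) (map (\<lambda>d. (1/2 :: complex) \<cdot>\<^sub>m RU n (U * (pauliZ ^\<^sub>m d)) (kron \<sigma> (proj 0))) [0,1])"

text \<open>Ideal honest system: RSP-SN with filtered input at its default b = 0.\<close>
definition RSPSN_hon :: "nat \<Rightarrow> complex mat \<Rightarrow> complex mat \<Rightarrow> complex mat" where
  "RSPSN_hon n U \<sigma> = kron \<sigma> (RSPSN U 0)"

text \<open>A general simulator: receives the qubit, applies a quantum instrument with
  classical outcome b \<in> {0,1} and a quantum memory of dimension m
  (Kraus operators sim_K b, each m x 2), inputs b into the filtered interface of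
  RSP-SN, receives U|b>, and applies a channel (Kraus operators sim_L, each
  2 x (m*2)) to memory \<otimes> received qubit, outputting a qubit.\<close>
record simulator =
  sim_m :: nat
  sim_K :: "nat \<Rightarrow> complex mat list"
  sim_L :: "complex mat list"

definition valid_sim :: "simulator \<Rightarrow> bool" where
  "valid_sim s \<longleftrightarrow>
     (\<forall>b<2. \<forall>K \<in> set (sim_K s b). K \<in> carrier_mat (sim_m s) 2) \<and>
     msum 2 (map (\<lambda>K. adj K * K) (sim_K s 0 @ sim_K s 1)) = 1\<^sub>m 2 \<and>
     (\<forall>L \<in> set (sim_L s). L \<in> carrier_mat 2 (sim_m s * 2)) \<and>
     msum (sim_m s * 2) (map (\<lambda>L. adj L * L) (sim_L s)) = 1\<^sub>m (sim_m s * 2)"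

definition RSPSN_sim :: "simulator \<Rightarrow> nat \<Rightarrow> complex mat \<Rightarrow> complex mat \<Rightarrow> complex mat" where
  "RSPSN_sim s n U \<rho> =
     msum (n*2) (concat (map (\<lambda>b. concat (map (\<lambda>K. map (\<lambda>L.
        conj_op (lift n L) (kron (conj_op (lift n K) \<rho>) (RSPSN U b)))
        (sim_L s)) (sim_K s b))) [0,1]))"

text \<open>A system with outer interfaces: Sender (classical U) and Receiver
  (qubit in, qubit out).  A distinguisher with an n-dimensional reference
  system is given by a finite family of branches (U_i, rho_i, E_i): with
  (subnormalised) weight tr rho_i it inputs U_i at the Sender interface and the
  qubit part of rho_i (a state on reference \<otimes> qubit) at the Receiver interface;
  finally it measures its classical branch register and the returned qubit
  together with the reference, outputting 1 with effect E_i in branch i.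
  (Since all outputs arrive only after all inputs, this covers adaptive
  distinguishers.)\<close>
type_synonym system = "nat \<Rightarrow> complex mat \<Rightarrow> complex mat \<Rightarrow> complex mat"

definition distinguisher :: "nat \<Rightarrow> nat \<Rightarrow> (complex mat \<times> complex mat \<times> complex mat) list \<Rightarrow> bool" where
  "distinguisher n k D \<longleftrightarrow>
     (\<forall>(U,\<rho>,E) \<in> set D. unitary2 U \<and> psd k \<rho> \<and> effect (n*2) E) \<and>
     (\<Sum>(U,\<rho>,E) \<leftarrow> D. trace \<rho>) = 1"

definition prob_out1 :: "nat \<Rightarrow> (complex mat \<times> complex mat \<times> complex mat) list \<Rightarrow> system \<Rightarrow> real" where
  "prob_out1 n D R = (\<Sum>(U,\<rho>,E) \<leftarrow> D. Re (trace (E * R n U \<rho>)))"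

text \<open>eps-indistinguishability for systems with a Receiver qubit input
  (input states on reference \<otimes> qubit, dimension n*2).\<close>
definition indist_mal :: "real \<Rightarrow> system \<Rightarrow> system \<Rightarrow> bool" where
  "indist_mal \<epsilon> R1 R2 \<longleftrightarrow>
     (\<forall>n D. distinguisher n (n*2) D \<longrightarrow> \<bar>prob_out1 n D R1 - prob_out1 n D R2\<bar> \<le> \<epsilon>)"

text \<open>eps-indistinguishability for systems whose Receiver interface only
  outputs (the "input" is the distinguisher's own n-dimensional memory).\<close>
definition indist_hon :: "real \<Rightarrow> system \<Rightarrow> system \<Rightarrow> bool" where
  "indist_hon \<epsilon> R1 R2 \<longleftrightarrow>
     (\<forall>n D. distinguisher n n D \<longrightarrow> \<bar>prob_out1 n D R1 - prob_out1 n D R2\<bar> \<le> \<epsilon>)"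

definition P4_constructs_RSPSN :: "real \<Rightarrow> bool" where
  "P4_constructs_RSPSN \<epsilon> \<longleftrightarrow>
     indist_hon \<epsilon> P4_real_hon RSPSN_hon \<and>
     (\<exists>s. valid_sim s \<and> indist_mal \<epsilon> P4_real_mal (RSPSN_sim s))"

end

theory Submission imports Defs begin

lemma sum_split_mult: fixes n q :: nat shows "(\<Sum>k<n*q. f k) = ((\<Sum>x<n. \<Sum>y<q. f (x*q+y)) :: 'a::comm_monoid_add)"
proof (induction n)
  case 0 then show ?case by simp
next
  case (Suc n)
  have "(\<Sum>k<Suc n*q. f k) = (\<Sum>k\<in>{0..<n*q+q}. f k)" by (simp add: lessThan_atLeast0 add.commute)
  also have "\<dots> = (\<Sum>k\<in>{0..<n*q}. f k) + (\<Sum>k\<in>{n*q..<n*q+q}. f k)"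
    by (rule sum.atLeastLessThan_concat[symmetric]) simp_all
  also have "(\<Sum>k\<in>{n*q..<n*q+q}. f k) = (\<Sum>k\<in>{0+n*q..<q+n*q}. f k)" by (simp add: add.commute)
  also have "\<dots> = (\<Sum>y\<in>{0..<q}. f (y+n*q))" by (rule sum.shift_bounds_nat_ivl)
  finally show ?case using Suc by (simp add: lessThan_atLeast0 add.commute)
qed

lemma adj_dims[simp]: "dim_row (adj A) = dim_col A" "dim_col (adj A) = dim_row A"
  by (auto simp: adj_def)
lemma adj_index[simp]: "i < dim_col A \<Longrightarrow> j < dim_row A \<Longrightarrow> adj A $$ (i,j) = cnj (A $$ (j,i))"
  by (simp add: adj_def)
lemma kron_dims[simp]: "dim_row (kron A B) = dim_row A * dim_row B" "dim_col (kron A B) = dim_col A * dim_col B"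
  by (auto simp: kron_def)
lemma kron_index[simp]: "i < dim_row A * dim_row B \<Longrightarrow> j < dim_col A * dim_col B \<Longrightarrow>
  kron A B $$ (i,j) = A $$ (i div dim_row B, j div dim_col B) * B $$ (i mod dim_row B, j mod dim_col B)"
  by (simp add: kron_def)

lemma lift_dims[simp]: "dim_row (lift n V) = n * dim_row V" "dim_col (lift n V) = n * dim_col V"
  by (auto simp: lift_def)

lemma lift_index: assumes "V \<in> carrier_mat p q" "i < n*p" "k < n*q"
  shows "lift n V $$ (i,k) = (if i div p = k div q then V $$ (i mod p, k mod q) else 0)"
proof -
  have "i div p < n" "k div q < n" using assms
    by (auto simp: less_mult_imp_div_less mult.commute[of n])
  then show ?thesis using assms by (simp add: lift_def)
qed

lemma lift_left:
  assumes V: "V \<in> carrier_mat p q" and r: "\<rho> \<in> carrier_mat (n*q) c" and i: "i < n*p" and j: "j < c"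
  shows "(lift n V * \<rho>) $$ (i,j) = (\<Sum>y<q. V $$ (i mod p, y) * \<rho> $$ ((i div p)*q+y, j))"
proof -
  have id: "i div p < n" using i by (simp add: less_mult_imp_div_less mult.commute[of n])
  have "(lift n V * \<rho>) $$ (i,j) = (\<Sum>k<n*q. lift n V $$ (i,k) * \<rho> $$ (k,j))"
    using V r i j by (simp add: scalar_prod_def lessThan_atLeast0)
  also have "\<dots> = (\<Sum>k<n*q. (if i div p = k div q then V $$ (i mod p, k mod q) else 0) * \<rho> $$ (k,j))"
    using V i by (intro sum.cong refl) (simp add: lift_index)
  also have "\<dots> = (\<Sum>x<n. \<Sum>y<q. (if i div p = (x*q+y) div q then V $$ (i mod p, (x*q+y) mod q) else 0) * \<rho> $$ (x*q+y,j))"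
    by (rule sum_split_mult)
  also have "\<dots> = (\<Sum>x<n. \<Sum>y<q. (if i div p = x then V $$ (i mod p, y) * \<rho> $$ (x*q+y,j) else 0))"
    by (intro sum.cong refl) auto
  also have "\<dots> = (\<Sum>y<q. \<Sum>x<n. (if i div p = x then V $$ (i mod p, y) * \<rho> $$ (x*q+y,j) else 0))"
    by (rule sum.swap)
  also have "\<dots> = (\<Sum>y<q. V $$ (i mod p, y) * \<rho> $$ ((i div p)*q+y, j))"
    using id by (intro sum.cong refl) (simp add: sum.delta)
  finally show ?thesis .
qed

lemma lift_right:
  assumes W: "W \<in> carrier_mat p q" and M: "M \<in> carrier_mat r (n*q)" and i: "i < r" and j: "j < n*p"
  shows "(M * adj (lift n W)) $$ (i,j) = (\<Sum>y<q. M $$ (i, (j div p)*q+y) * cnj (W $$ (j mod p, y)))"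
proof -
  have id: "j div p < n" using j by (simp add: less_mult_imp_div_less mult.commute[of n])
  have "(M * adj (lift n W)) $$ (i,j) = (\<Sum>k<n*q. M $$ (i,k) * cnj (lift n W $$ (j,k)))"
    using W M i j by (simp add: scalar_prod_def lessThan_atLeast0)
  also have "\<dots> = (\<Sum>k<n*q. M $$ (i,k) * cnj (if j div p = k div q then W $$ (j mod p, k mod q) else 0))"
    using W j by (intro sum.cong refl) (simp add: lift_index)
  also have "\<dots> = (\<Sum>x<n. \<Sum>y<q. M $$ (i,x*q+y) * cnj (if j div p = (x*q+y) div q then W $$ (j mod p, (x*q+y) mod q) else 0))"
    by (rule sum_split_mult)
  also have "\<dots> = (\<Sum>x<n. \<Sum>y<q. (if j div p = x then M $$ (i,x*q+y) * cnj (W $$ (j mod p, y)) else 0))"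
    by (intro sum.cong refl) auto
  also have "\<dots> = (\<Sum>y<q. \<Sum>x<n. (if j div p = x then M $$ (i,x*q+y) * cnj (W $$ (j mod p, y)) else 0))"
    by (rule sum.swap)
  also have "\<dots> = (\<Sum>y<q. M $$ (i, (j div p)*q+y) * cnj (W $$ (j mod p, y)))"
    using id by (intro sum.cong refl) (simp add: sum.delta)
  finally show ?thesis .
qed

lemma conj_lift:
  assumes V: "V \<in> carrier_mat p q" and r: "\<rho> \<in> carrier_mat (n*q) (n*q)" and i: "i < n*p" and j: "j < n*p"
  shows "conj_op (lift n V) \<rho> $$ (i,j) =
    (\<Sum>y'<q. (\<Sum>y<q. V $$ (i mod p, y) * \<rho> $$ ((i div p)*q+y, (j div p)*q+y')) * cnj (V $$ (j mod p, y')))"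
proof -
  have L: "lift n V \<in> carrier_mat (n*p) (n*q)" using V unfolding carrier_mat_def by simp
  have M: "lift n V * \<rho> \<in> carrier_mat (n*p) (n*q)" using mult_carrier_mat[OF L r] .
  have jj: "(j div p)*q+y' < n*q" if "y' < q" for y'
  proof -
    have "j div p < n" using j by (simp add: less_mult_imp_div_less mult.commute[of n])
    then have "Suc (j div p) \<le> n" by simp
    then have "Suc (j div p) * q \<le> n*q" by (rule mult_le_mono1)
    then show ?thesis using that by simp
  qed
  have "(lift n V * \<rho> * adj (lift n V)) $$ (i,j) = (\<Sum>y<q. (lift n V * \<rho>) $$ (i, (j div p)*q+y) * cnj (V $$ (j mod p, y)))"
    by (rule lift_right[OF V M i j])
  also have "\<dots> = (\<Sum>y'<q. (\<Sum>y<q. V $$ (i mod p, y) * \<rho> $$ ((i div p)*q+y, (j div p)*q+y')) * cnj (V $$ (j mod p, y')))"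
  proof (rule sum.cong[OF refl])
    fix y' assume "y' \<in> {..<q}"
    then have "(j div p)*q+y' < n*q" using jj by simp
    then show "(lift n V * \<rho>) $$ (i, (j div p)*q+y') * cnj (V $$ (j mod p, y')) =
      (\<Sum>y<q. V $$ (i mod p, y) * \<rho> $$ ((i div p)*q+y, (j div p)*q+y')) * cnj (V $$ (j mod p, y'))"
      by (simp only: lift_left[OF V r i])
  qed
  finally show ?thesis unfolding conj_op_def .
qed

lemma sum2: "(\<Sum>y<(2::nat). f y) = f 0 + f 1"
  by (simp add: numeral_2_eq_2)

lemma conj_op_dims[simp]: "dim_row (conj_op V X) = dim_row V" "dim_col (conj_op V X) = dim_row V"
  by (auto simp: conj_op_def)

lemma proj_carrier[simp]: "proj b \<in> carrier_mat 2 2" by (simp add: proj_def)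
lemma pauliZ_carrier[simp]: "pauliZ \<in> carrier_mat 2 2" by (simp add: pauliZ_def)
lemma pd[simp]: "dim_row (proj b) = 2" "dim_col (proj b) = 2" "dim_row pauliZ = 2" "dim_col pauliZ = 2"
  by (auto simp: proj_def pauliZ_def)

lemma kron2_index:
  assumes "\<sigma> \<in> carrier_mat n m" "B \<in> carrier_mat 2 2" "a < n" "b < m" "y < 2" "y' < 2"
  shows "kron \<sigma> B $$ (a*2+y, b*2+y') = \<sigma> $$ (a,b) * B $$ (y,y')"
proof -
  have "a*2+y < n*2" "b*2+y' < m*2" using assms by linarith+
  then show ?thesis using assms by simp
qed

lemma conj_proj:
  assumes U: "U \<in> carrier_mat 2 2" and b: "b < 2" and r: "r < 2" and s: "s < 2"
  shows "conj_op U (proj b) $$ (r,s) = U $$ (r,b) * cnj (U $$ (s,b))"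
proof -
  have "conj_op U (proj b) $$ (r,s) = (\<Sum>k<2. (\<Sum>l<2. U $$ (r,l) * proj b $$ (l,k)) * cnj (U $$ (s,k)))"
    using U r s unfolding conj_op_def
    by (simp add: scalar_prod_def lessThan_atLeast0)
  then show ?thesis using b by (simp add: sum2 proj_def) (cases b; simp add: numeral_2_eq_2 less_Suc_eq)
qed

lemma UZ_index:
  assumes U: "U \<in> carrier_mat 2 2" and r: "r < 2" and d: "d < 2" and y: "y < 2"
  shows "(U * pauliZ ^\<^sub>m d) $$ (r,y) = (if d = 1 \<and> y = 1 then - U $$ (r,y) else U $$ (r,y))"
proof (cases "d = 0")
  have "dim_row pauliZ = 2" by (simp add: pauliZ_def)
  case True then show ?thesis using U r y \<open>dim_row pauliZ = 2\<close> by simp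
next
  case False then have "d = 1" using d by simp
  then have "(U * pauliZ ^\<^sub>m d) $$ (r,y) = (\<Sum>l<2. U $$ (r,l) * pauliZ $$ (l,y))"
    using U r y by (simp add: scalar_prod_def lessThan_atLeast0)
  then show ?thesis using \<open>d = 1\<close> y by (simp add: sum2 pauliZ_def) (cases y; simp)
qed

lemma div2_lt: "i < n*2 \<Longrightarrow> i div 2 < (n::nat)" by linarith
lemma mod2_lt: "i mod 2 < (2::nat)" by simp

lemma hon_term:
  assumes U: "U \<in> carrier_mat 2 2" and s: "\<sigma> \<in> carrier_mat n n" and d: "d < 2"
    and i: "i < n*2" and j: "j < n*2"
  shows "RU n (U * pauliZ ^\<^sub>m d) (kron \<sigma> (proj 0)) $$ (i,j) =
     \<sigma> $$ (i div 2, j div 2) * (U $$ (i mod 2, 0) * cnj (U $$ (j mod 2, 0)))"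
proof -
  have V: "U * pauliZ ^\<^sub>m d \<in> carrier_mat 2 2" using U by simp
  have r: "kron \<sigma> (proj 0) \<in> carrier_mat (n*2) (n*2)" using s unfolding carrier_mat_def by simp
  have kv: "kron \<sigma> (proj 0) $$ ((i div 2)*2+y, (j div 2)*2+y') = (if y = 0 \<and> y' = 0 then \<sigma> $$ (i div 2, j div 2) else 0)"
    if "y < 2" "y' < 2" for y y'
    using kron2_index[OF s proj_carrier div2_lt[OF i] div2_lt[OF j] that] by (simp add: proj_def that)
  have a0: "(U * pauliZ ^\<^sub>m d) $$ (i mod 2, 0) = U $$ (i mod 2, 0)"
    using UZ_index[OF U mod2_lt[of i] d, of 0] by simp
  have b0: "(U * pauliZ ^\<^sub>m d) $$ (j mod 2, 0) = U $$ (j mod 2, 0)"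
    using UZ_index[OF U mod2_lt[of j] d, of 0] by simp
  have k00: "kron \<sigma> (proj 0) $$ ((i div 2)*2, (j div 2)*2) = \<sigma> $$ (i div 2, j div 2)" using kv[of 0 0] by simp
  have k01: "kron \<sigma> (proj 0) $$ ((i div 2)*2, (j div 2)*2+1) = 0" using kv[of 0 1] by simp
  have k10: "kron \<sigma> (proj 0) $$ ((i div 2)*2+1, (j div 2)*2) = 0" using kv[of 1 0] by simp
  have k11: "kron \<sigma> (proj 0) $$ ((i div 2)*2+1, (j div 2)*2+1) = 0" using kv[of 1 1] by simp
  have "RU n (U * pauliZ ^\<^sub>m d) (kron \<sigma> (proj 0)) $$ (i,j) =
    (\<Sum>y'<2. (\<Sum>y<2. (U * pauliZ ^\<^sub>m d) $$ (i mod 2, y) * kron \<sigma> (proj 0) $$ ((i div 2)*2+y, (j div 2)*2+y')) * cnj ((U * pauliZ ^\<^sub>m d) $$ (j mod 2, y')))"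
    unfolding RU_def by (rule conj_lift[OF V r i j])
  also have "\<dots> = (U * pauliZ ^\<^sub>m d) $$ (i mod 2, 0) * \<sigma> $$ (i div 2, j div 2) * cnj ((U * pauliZ ^\<^sub>m d) $$ (j mod 2, 0))"
    by (simp only: sum2 k00 k01 k10 k11 mult_zero_right mult_zero_left add_0_right add_0_left)
  also have "\<dots> = \<sigma> $$ (i div 2, j div 2) * (U $$ (i mod 2, 0) * cnj (U $$ (j mod 2, 0)))"
    by (simp only: a0 b0 mult_ac)
  finally show ?thesis .
qed

lemma hon_eq:
  assumes U: "unitary2 U" and s: "\<sigma> \<in> carrier_mat n n"
  shows "P4_real_hon n U \<sigma> = RSPSN_hon n U \<sigma>"
proof -
  have U2: "U \<in> carrier_mat 2 2" using U by (simp add: unitary2_def)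
  show ?thesis
  proof (rule eq_matI)
    fix i j assume i0: "i < dim_row (RSPSN_hon n U \<sigma>)" and j0: "j < dim_col (RSPSN_hon n U \<sigma>)"
    have i: "i < n*2" and j: "j < n*2" using i0 j0 U2 s by (auto simp: RSPSN_hon_def RSPSN_def)
    have dm: "dim_row (RU n (U * pauliZ ^\<^sub>m d) X) = n*2" "dim_col (RU n (U * pauliZ ^\<^sub>m d) X) = n*2" for d X
      using U2 by (auto simp: RU_def)
    show "P4_real_hon n U \<sigma> $$ (i, j) = RSPSN_hon n U \<sigma> $$ (i, j)"
    proof -
      have h0: "RU n U (kron \<sigma> (proj 0)) $$ (i,j) = \<sigma> $$ (i div 2, j div 2) * (U $$ (i mod 2, 0) * cnj (U $$ (j mod 2, 0)))"
        using hon_term[OF U2 s _ i j, of 0] U2 by simp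
      have h1: "RU n (U * pauliZ) (kron \<sigma> (proj 0)) $$ (i,j) = \<sigma> $$ (i div 2, j div 2) * (U $$ (i mod 2, 0) * cnj (U $$ (j mod 2, 0)))"
        using hon_term[OF U2 s _ i j, of 1] U2 by simp
      have d0: "dim_row (RU n U X) = n*2" "dim_col (RU n U X) = n*2"
       "dim_row (RU n (U*pauliZ) X) = n*2" "dim_col (RU n (U*pauliZ) X) = n*2" for X
        using U2 by (auto simp: RU_def)
      show ?thesis
      unfolding P4_real_hon_def msum_def RSPSN_hon_def RSPSN_def
      using i j U2 s d0 h0 h1
      by (simp add: conj_proj mod2_lt div2_lt)
    qed
  next
    show "dim_row (P4_real_hon n U \<sigma>) = dim_row (RSPSN_hon n U \<sigma>)"
      using U2 s by (simp add: P4_real_hon_def msum_def RSPSN_hon_def RSPSN_def)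
    show "dim_col (P4_real_hon n U \<sigma>) = dim_col (RSPSN_hon n U \<sigma>)"
      using U2 s by (simp add: P4_real_hon_def msum_def RSPSN_hon_def RSPSN_def)
  qed
qed

definition Kb :: "nat \<Rightarrow> complex mat" where
  "Kb b = mat 1 2 (\<lambda>(i,j). if j = b then 1 else 0)"

definition mysim :: simulator where
  "mysim = \<lparr>sim_m = 1, sim_K = (\<lambda>b. [Kb b]), sim_L = [1\<^sub>m 2]\<rparr>"

lemma Kb_carrier[simp]: "Kb b \<in> carrier_mat 1 2" by (simp add: Kb_def)
lemma Kb_carrier'[simp]: "Kb b \<in> carrier_mat (Suc 0) 2" by (simp add: Kb_def)

lemma lift_one: "lift n (1\<^sub>m 2) = 1\<^sub>m (n*2)"
proof (rule eq_matI)
  fix i j assume "i < dim_row (1\<^sub>m (n*2) :: complex mat)" "j < dim_col (1\<^sub>m (n*2) :: complex mat)"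
  then have i: "i < n*2" and j: "j < n*2" by auto
  have "(i div 2 = j div 2 \<and> i mod 2 = j mod 2) = (i = j)"
    by (metis div_mult_mod_eq)
  moreover have "lift n (1\<^sub>m 2) $$ (i,j) = (if i div 2 = j div 2 then (1\<^sub>m 2 :: complex mat) $$ (i mod 2, j mod 2) else 0)"
    by (rule lift_index) (use i j in auto)
  ultimately show "lift n (1\<^sub>m 2) $$ (i, j) = 1\<^sub>m (n*2) $$ (i, j)"
    using i j by auto
qed auto

lemma adj_one: "adj (1\<^sub>m k) = 1\<^sub>m k"
  by (rule eq_matI) auto

lemma adjK: "adj (Kb b) * Kb b = proj b"
proof (rule eq_matI)
  fix i j assume "i < dim_row (proj b)" "j < dim_col (proj b)"
  then have "i < 2" "j < 2" by auto
  then show "(adj (Kb b) * Kb b) $$ (i,j) = proj b $$ (i,j)"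
    by (simp add: scalar_prod_def Kb_def proj_def)
qed (auto simp: Kb_def)

lemma proj_sum: "proj 0 + proj (Suc 0) = 1\<^sub>m 2"
proof (rule eq_matI)
  fix i j assume "i < dim_row (1\<^sub>m 2 :: complex mat)" "j < dim_col (1\<^sub>m 2 :: complex mat)"
  then have "i < 2" "j < 2" by auto
  then show "(proj 0 + proj (Suc 0)) $$ (i,j) = 1\<^sub>m 2 $$ (i,j)"
    by (simp add: proj_def less_2_cases_iff) auto
qed auto

lemma valid_mysim: "valid_sim mysim"
proof -
  have a: "msum 2 (map (\<lambda>K. adj K * K) [Kb 0, Kb 1]) = 1\<^sub>m 2"
    by (simp add: msum_def adjK proj_sum)
  have b: "adj (1\<^sub>m 2) * 1\<^sub>m 2 = (1\<^sub>m 2 :: complex mat)"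
    by (simp add: adj_one)
  show ?thesis using a b unfolding valid_sim_def mysim_def
    by (auto simp: msum_def)
qed

lemma conj_one: "X \<in> carrier_mat (n*2) (n*2) \<Longrightarrow> conj_op (lift n (1\<^sub>m 2)) X = X"
  by (simp add: conj_op_def lift_one adj_one)

lemma M_index:
  assumes r: "\<rho> \<in> carrier_mat (n*2) (n*2)" and b: "b < 2" and a: "a < n" and c: "c < n"
  shows "conj_op (lift n (Kb b)) \<rho> $$ (a,c) = \<rho> $$ (a*2+b, c*2+b)"
proof -
  have a': "a < n*1" "c < n*1" using a c by auto
  show ?thesis
    apply (subst conj_lift[OF Kb_carrier r a'])
    using b by (simp add: sum2 Kb_def) (cases b; simp add: numeral_2_eq_2 less_Suc_eq)
qed

lemma mal_term:
  assumes U: "U \<in> carrier_mat 2 2" and r: "\<rho> \<in> carrier_mat (n*2) (n*2)" and d: "d < 2"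
    and i: "i < n*2" and j: "j < n*2"
  shows "RU n (U * pauliZ ^\<^sub>m d) \<rho> $$ (i,j) =
     (\<Sum>y'<2. (\<Sum>y<2. (if d = 1 \<and> y = 1 then - U $$ (i mod 2,y) else U $$ (i mod 2,y)) * \<rho> $$ ((i div 2)*2+y, (j div 2)*2+y'))
       * cnj (if d = 1 \<and> y' = 1 then - U $$ (j mod 2,y') else U $$ (j mod 2,y')))"
proof -
  have V: "U * pauliZ ^\<^sub>m d \<in> carrier_mat 2 2" using U by simp
  have a0: "(U * pauliZ ^\<^sub>m d) $$ (i mod 2, 0) = U $$ (i mod 2, 0)"
    using UZ_index[OF U mod2_lt[of i] d, of 0] by simp
  have b0: "(U * pauliZ ^\<^sub>m d) $$ (j mod 2, 0) = U $$ (j mod 2, 0)"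
    using UZ_index[OF U mod2_lt[of j] d, of 0] by simp
  have a1: "(U * pauliZ ^\<^sub>m d) $$ (i mod 2, 1) = (if d = 1 then - U $$ (i mod 2,1) else U $$ (i mod 2,1))"
    using UZ_index[OF U mod2_lt[of i] d, of 1] by simp
  have b1: "(U * pauliZ ^\<^sub>m d) $$ (j mod 2, 1) = (if d = 1 then - U $$ (j mod 2,1) else U $$ (j mod 2,1))"
    using UZ_index[OF U mod2_lt[of j] d, of 1] by simp
  show ?thesis
    unfolding RU_def
    apply (subst conj_lift[OF V r i j])
    apply (simp only: sum2 a0 a1 b0 b1)
    by simp
qed

lemma mal_eq:
  assumes U: "unitary2 U" and r: "\<rho> \<in> carrier_mat (n*2) (n*2)"
  shows "P4_real_mal n U \<rho> = RSPSN_sim mysim n U \<rho>"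
proof -
  have U2: "U \<in> carrier_mat 2 2" using U by (simp add: unitary2_def)
  have Ud: "dim_row U = 2" "dim_col U = 2" using U2 by auto
  have kd: "dim_row (kron (conj_op (lift n (Kb b)) \<rho>) (RSPSN U b)) = n*2"
           "dim_col (kron (conj_op (lift n (Kb b)) \<rho>) (RSPSN U b)) = n*2" for b
    by (simp_all add: RSPSN_def Kb_def Ud)
  have kc: "kron (conj_op (lift n (Kb b)) \<rho>) (RSPSN U b) \<in> carrier_mat (n*2) (n*2)" for b
    using kd unfolding carrier_mat_def by simp
  have sim: "RSPSN_sim mysim n U \<rho> = kron (conj_op (lift n (Kb 0)) \<rho>) (RSPSN U 0) + (kron (conj_op (lift n (Kb 1)) \<rho>) (RSPSN U 1) + 0\<^sub>m (n*2) (n*2))"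
    unfolding RSPSN_sim_def mysim_def msum_def using conj_one[OF kc] by simp
  have d0: "dim_row (RU n U X) = n*2" "dim_col (RU n U X) = n*2"
       "dim_row (RU n (U*pauliZ) X) = n*2" "dim_col (RU n (U*pauliZ) X) = n*2" for X
    by (simp_all add: RU_def Ud)
  have real: "P4_real_mal n U \<rho> = 1/2 \<cdot>\<^sub>m RU n U \<rho> + (1/2 \<cdot>\<^sub>m RU n (U*pauliZ) \<rho> + 0\<^sub>m (n*2) (n*2))"
    unfolding P4_real_mal_def msum_def using right_mult_one_mat[OF U2] by simp
  show ?thesis
  proof (rule eq_matI)
    fix i j assume i0: "i < dim_row (RSPSN_sim mysim n U \<rho>)" and j0: "j < dim_col (RSPSN_sim mysim n U \<rho>)"
    have i: "i < n*2" and j: "j < n*2" using i0 j0 unfolding sim by (simp_all add: kd)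
    define a where "a = i div 2 * 2"
    define b where "b = j div 2 * 2"
    define x where "x = i mod 2"
    define y where "y = j mod 2"
    have h0: "RU n U \<rho> $$ (i,j) = (U $$ (x,0) * \<rho> $$ (a,b) + U $$ (x,1) * \<rho> $$ (a+1,b)) * cnj (U $$ (y,0))
       + (U $$ (x,0) * \<rho> $$ (a,b+1) + U $$ (x,1) * \<rho> $$ (a+1,b+1)) * cnj (U $$ (y,1))"
      using mal_term[OF U2 r _ i j, of 0] right_mult_one_mat[OF U2] unfolding a_def b_def x_def y_def by (simp add: sum2)
    have h1: "RU n (U * pauliZ) \<rho> $$ (i,j) = (U $$ (x,0) * \<rho> $$ (a,b) - U $$ (x,1) * \<rho> $$ (a+1,b)) * cnj (U $$ (y,0))
       - (U $$ (x,0) * \<rho> $$ (a,b+1) - U $$ (x,1) * \<rho> $$ (a+1,b+1)) * cnj (U $$ (y,1))"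
      using mal_term[OF U2 r _ i j, of 1] unfolding a_def b_def x_def y_def by (simp add: sum2)
    have k0: "kron (conj_op (lift n (Kb c)) \<rho>) (RSPSN U c) $$ (i,j) = \<rho> $$ ((i div 2)*2+c, (j div 2)*2+c) * (U $$ (i mod 2, c) * cnj (U $$ (j mod 2, c)))"
      if "c < 2" for c
    proof -
      have "kron (conj_op (lift n (Kb c)) \<rho>) (RSPSN U c) $$ (i,j) = conj_op (lift n (Kb c)) \<rho> $$ (i div 2, j div 2) * RSPSN U c $$ (i mod 2, j mod 2)"
        using i j kd[of c] by (simp add: RSPSN_def Ud)
      then show ?thesis
        by (simp add: M_index[OF r that div2_lt[OF i] div2_lt[OF j]] RSPSN_def conj_proj[OF U2 that mod2_lt mod2_lt])
    qed
    have k0': "kron (conj_op (lift n (Kb 0)) \<rho>) (RSPSN U 0) $$ (i,j) = \<rho> $$ (a,b) * (U $$ (x, 0) * cnj (U $$ (y, 0)))"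
      using k0[of 0] unfolding a_def b_def x_def y_def by simp
    have k1': "kron (conj_op (lift n (Kb 1)) \<rho>) (RSPSN U 1) $$ (i,j) = \<rho> $$ (a+1,b+1) * (U $$ (x, 1) * cnj (U $$ (y, 1)))"
      using k0[of 1] unfolding a_def b_def x_def y_def by simp
    have L: "P4_real_mal n U \<rho> $$ (i,j) = 1/2 * RU n U \<rho> $$ (i,j) + (1/2 * RU n (U*pauliZ) \<rho> $$ (i,j) + 0)"
      unfolding real using i j d0 by simp
    have R: "RSPSN_sim mysim n U \<rho> $$ (i,j) = kron (conj_op (lift n (Kb 0)) \<rho>) (RSPSN U 0) $$ (i,j) + (kron (conj_op (lift n (Kb 1)) \<rho>) (RSPSN U 1) $$ (i,j) + 0)"
      unfolding sim using i j kd by simp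
    show "P4_real_mal n U \<rho> $$ (i, j) = RSPSN_sim mysim n U \<rho> $$ (i, j)"
      unfolding L R h0 h1 k0' k1' by (simp add: algebra_simps)
  next
    show "dim_row (P4_real_mal n U \<rho>) = dim_row (RSPSN_sim mysim n U \<rho>)"
      unfolding sim real by (simp add: d0 kd)
    show "dim_col (P4_real_mal n U \<rho>) = dim_col (RSPSN_sim mysim n U \<rho>)"
      unfolding sim real by (simp add: d0 kd)
  qed
qed

lemma prob_cong:
  assumes "\<And>U \<rho> E. (U,\<rho>,E) \<in> set D \<Longrightarrow> R1 n U \<rho> = R2 n U \<rho>"
  shows "prob_out1 n D R1 = prob_out1 n D R2"
  unfolding prob_out1_def
  by (rule arg_cong[where f = sum_list], rule map_cong) (auto simp: assms)

theorem theorem7: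
  shows "P4_constructs_RSPSN 0"
  unfolding P4_constructs_RSPSN_def
proof (intro conjI exI)
  show "indist_hon 0 P4_real_hon RSPSN_hon"
    unfolding indist_hon_def
  proof (intro allI impI)
    fix n D assume "distinguisher n n D"
    then have "\<forall>(U,\<rho>,E) \<in> set D. unitary2 U \<and> psd n \<rho>" unfolding distinguisher_def by auto
    then have "prob_out1 n D P4_real_hon = prob_out1 n D RSPSN_hon"
      by (intro prob_cong hon_eq) (auto simp: psd_def)
    then show "\<bar>prob_out1 n D P4_real_hon - prob_out1 n D RSPSN_hon\<bar> \<le> 0" by simp
  qed
  show "valid_sim mysim" by (rule valid_mysim)
  show "indist_mal 0 P4_real_mal (RSPSN_sim mysim)"
    unfolding indist_mal_def
  proof (intro allI impI)
    fix n D assume "distinguisher n (n*2) D"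
    then have "\<forall>(U,\<rho>,E) \<in> set D. unitary2 U \<and> psd (n*2) \<rho>" unfolding distinguisher_def by auto
    then have "prob_out1 n D P4_real_mal = prob_out1 n D (RSPSN_sim mysim)"
      by (intro prob_cong mal_eq) (auto simp: psd_def)
    then show "\<bar>prob_out1 n D P4_real_mal - prob_out1 n D (RSPSN_sim mysim)\<bar> \<le> 0" by simp
  qed
qed

end
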